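(* Let $n$ be a positive integer with $n \equiv 0 \pmod 6$. Let $\mathcal{H}$ be the collection of subgroups of $S_n$ consisting of: all stabilizers in $S_n$ of partitions of $\{1,\dots,n\}$ into two blocks of size $n/2$; the alternating group $A_n$; and, for each $1\le i\le n/3-1$, all setwise stabilizers in $S_n$ of $i$-element subsets of $\{1,\dots,n\}$. Then the union of the subgroups in $\mathcal{H}$ is all of $S_n$, i.e. $\mathcal{H}$ is a cover of $S_n$.
   Context: $S_n$ is the symmetric group on $\{1,\dots,n\}$. The stabilizer of a partition $\{B_1,B_2\}$ is the set of $g\in S_n$ with $\{B_1^g,B_2^g\}=\{B_1,B_2\}$ (a subgroup isomorphic to $S_{n/2}\wr S_2$); the setwise stabilizer of an $i$-subset is isomorphic to $S_i\times S_{n-i}$. A cover of a group is a collection of proper subgroups whose union is the group. *)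

theory Defs
  imports "HOL-Algebra.Sym_Groups"
begin

definition set_stab :: "nat \<Rightarrow> nat set \<Rightarrow> (nat \<Rightarrow> nat) set" where
  "set_stab n A = {g \<in> carrier (sym_group n). g ` A = A}"

definition part_stab :: "nat \<Rightarrow> nat set \<Rightarrow> nat set \<Rightarrow> (nat \<Rightarrow> nat) set" where
  "part_stab n B1 B2 = {g \<in> carrier (sym_group n). {g ` B1, g ` B2} = {B1, B2}}"

definition cover_H :: "nat \<Rightarrow> (nat \<Rightarrow> nat) set set" where
  "cover_H n =
     {part_stab n B ({1..n} - B) | B. B \<subseteq> {1..n} \<and> card B = n div 2}
   \<union> {carrier (alt_group n)}
   \<union> {set_stab n A | A. A \<subseteq> {1..n} \<and> 1 \<le> card A \<and> card A \<le> n div 3 - 1}"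

definition is_cover :: "('a, 'b) monoid_scheme \<Rightarrow> 'a set set \<Rightarrow> bool" where
  "is_cover G \<H> \<longleftrightarrow> (\<forall>K\<in>\<H>. subgroup K G \<and> K \<noteq> carrier G) \<and> \<Union>\<H> = carrier G"

end

theory Submission
  imports Defs "HOL-Combinatorics.Orbits"
begin


lemma orb_card:
  assumes "permutation f"
  shows "card (orbit f x) = funpow_dist1 f x x \<and> (f ^^ card (orbit f x)) x = x
     \<and> inj_on (\<lambda>n. (f ^^ n) x) {0..<card (orbit f x)}
     \<and> orbit f x = (\<lambda>n. (f ^^ n) x) ` {0..<card (orbit f x)}"
proof -
  have s: "x \<in> orbit f x" using permutation_self_in_orbit[OF assms] .
  have e: "orbit f x = (\<lambda>n. (f ^^ n) x) ` {0..<funpow_dist1 f x x}"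
    using orbit_conv_funpow_dist1[OF s] .
  have i: "inj_on (\<lambda>n. (f ^^ n) x) {0..<funpow_dist1 f x x}" using inj_on_funpow_dist1[OF s] .
  have c: "card (orbit f x) = funpow_dist1 f x x" using e i card_image by fastforce
  show ?thesis using c e i funpow_dist1_prop[OF s] by simp
qed

lemma orb_eq:
  assumes "permutation f" "z \<in> orbit f y"
  shows "orbit f z = orbit f y"
proof
  show "orbit f z \<subseteq> orbit f y" using assms(2) orbit_trans by fast
  have "y \<in> orbit f z" using orbit_swap[OF permutation_self_in_orbit[OF assms(1)] assms(2)] .
  then show "orbit f y \<subseteq> orbit f z" using orbit_trans by fast
qed

lemma orb_dist:
  assumes "permutation f" "k < card (orbit f r)"
  shows "funpow_dist f r ((f ^^ k) r) = k"
proof -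
  let ?m = "card (orbit f r)"
  have le: "funpow_dist f r ((f ^^ k) r) \<le> k" unfolding funpow_dist_def by (rule Least_le) simp
  have "(f ^^ funpow_dist f r ((f ^^ k) r)) r = (f ^^ k) r"
    by (rule funpow_dist_prop) (simp add: assms(1) funpow_in_orbit permutation_self_in_orbit)
  moreover have "inj_on (\<lambda>n. (f ^^ n) r) {0..<?m}" using orb_card[OF assms(1)] by blast
  ultimately show ?thesis using le assms(2) by (auto dest: inj_onD)
qed

lemma orb_dist_step:
  assumes "permutation f" "y \<in> orbit f r"
  shows "funpow_dist f r (f y) = Suc (funpow_dist f r y) mod card (orbit f r)"
proof -
  let ?m = "card (orbit f r)"
  obtain k where k: "k < ?m" "y = (f ^^ k) r" using orb_card[OF assms(1), of r] assms(2) by auto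
  have m: "(f ^^ ?m) r = r" using orb_card[OF assms(1)] by blast
  have "f y = (f ^^ Suc k) r" using k by simp
  also have "\<dots> = (f ^^ (Suc k mod ?m)) r" using m funpow_mod_eq by metis
  finally have "funpow_dist f r (f y) = Suc k mod ?m"
    using orb_dist[OF assms(1)] k by (metis mod_less_divisor zero_less_iff_neq_zero less_nat_zero_code)
  moreover have "funpow_dist f r y = k" using orb_dist[OF assms(1) k(1)] k by simp
  ultimately show ?thesis by simp
qed

lemma orb_image:
  assumes "permutation f"
  shows "f ` orbit f x = orbit f x"
proof -
  have sub: "f ` orbit f x \<subseteq> orbit f x" by (auto intro: orbit.step)
  have "finite (orbit f x)" by (simp add: assms finite_orbit permutation_self_in_orbit)
  moreover have "card (f ` orbit f x) = card (orbit f x)"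
    by (meson assms card_image inj_on_subset permutation_bijective bij_is_inj subset_UNIV)
  ultimately show ?thesis using sub card_subset_eq by blast
qed

lemma orb_sub:
  assumes "f permutes X" "x \<in> X"
  shows "orbit f x \<subseteq> X"
proof
  fix y assume "y \<in> orbit f x" then show "y \<in> X"
    by induct (simp_all add: permutes_in_image[OF assms(1)] assms(2))
qed





lemma inv_image_perm:
  assumes "g permutes X" "g ` A = A" shows "inv' g ` A = A"
  by (metis assms bij_is_inj image_inv_f_f permutes_bij)

lemma subgroup_set_stab: "subgroup (set_stab n A) (sym_group n)"
proof (rule group.subgroupI[OF sym_group_is_group])
  show "set_stab n A \<subseteq> carrier (sym_group n)" unfolding set_stab_def by auto
  show "set_stab n A \<noteq> {}" unfolding set_stab_def
    using group.subgroup_self[OF sym_group_is_group] by (auto intro!: exI[of _ id] simp: sym_group_carrier permutes_id)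
next
  fix a assume a: "a \<in> set_stab n A"
  then have p: "a permutes {1..n}" "a ` A = A" unfolding set_stab_def by (auto simp: sym_group_carrier)
  then show "inv\<^bsub>sym_group n\<^esub> a \<in> set_stab n A" using a unfolding set_stab_def
    using inv_image_perm[OF p] permutes_inv[OF p(1)] by (auto simp: sym_group_carrier)
next
  fix a b assume "a \<in> set_stab n A" "b \<in> set_stab n A"
  then have p: "a permutes {1..n}" "b permutes {1..n}" "a ` A = A" "b ` A = A"
    unfolding set_stab_def by (auto simp: sym_group_carrier)
  have "(a \<circ> b) ` A = A" using p(3,4) by (metis image_comp)
  then show "a \<otimes>\<^bsub>sym_group n\<^esub> b \<in> set_stab n A" unfolding set_stab_def
    using p by (simp add: sym_group_mult sym_group_carrier permutes_compose)
qed

lemma subgroup_part_stab: "subgroup (part_stab n B1 B2) (sym_group n)"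
proof (rule group.subgroupI[OF sym_group_is_group])
  show "part_stab n B1 B2 \<subseteq> carrier (sym_group n)" unfolding part_stab_def by auto
  show "part_stab n B1 B2 \<noteq> {}" unfolding part_stab_def
    by (auto intro!: exI[of _ id] simp: sym_group_carrier permutes_id)
next
  fix a assume a: "a \<in> part_stab n B1 B2"
  then have p: "a permutes {1..n}" and e: "{a ` B1, a ` B2} = {B1, B2}" unfolding part_stab_def
    by (auto simp: sym_group_carrier)
  have "{inv' a ` B1, inv' a ` B2} = image (inv' a) ` {B1, B2}" by simp
  also have "\<dots> = image (inv' a) ` {a ` B1, a ` B2}" using e by simp
  also have "\<dots> = {B1, B2}" by (simp add: image_inv_f_f permutes_inj[OF p])
  finally show "inv\<^bsub>sym_group n\<^esub> a \<in> part_stab n B1 B2" using a p unfolding part_stab_def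
    by (auto simp: sym_group_inv_closed)
next
  fix a b assume "a \<in> part_stab n B1 B2" "b \<in> part_stab n B1 B2"
  then have p: "a permutes {1..n}" "b permutes {1..n}" and e: "{a ` B1, a ` B2} = {B1, B2}"
     "{b ` B1, b ` B2} = {B1, B2}" unfolding part_stab_def
    by (auto simp: sym_group_carrier)
  have "{(a \<circ> b) ` B1, (a \<circ> b) ` B2} = image a ` {b ` B1, b ` B2}" by (simp add: image_comp)
  also have "\<dots> = {B1, B2}" using e by simp
  finally show "a \<otimes>\<^bsub>sym_group n\<^esub> b \<in> part_stab n B1 B2" unfolding part_stab_def
    using p by (auto simp: sym_group_mult sym_group_carrier permutes_compose)
qed

lemma proper_alt: assumes "n \<ge> 2" shows "carrier (alt_group n) \<noteq> carrier (sym_group n)"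
proof -
  have "transpose 1 2 \<in> carrier (sym_group n)" using assms
    by (simp add: sym_group_carrier permutes_swap_id)
  moreover have "transpose 1 (2::nat) \<notin> carrier (alt_group n)" by (simp add: alt_group_carrier evenperm_swap)
  ultimately show ?thesis by blast
qed

lemma proper_set_stab:
  assumes "A \<subseteq> {1..n}" "1 \<le> card A" "card A < n"
  shows "set_stab n A \<noteq> carrier (sym_group n)"
proof -
  obtain a where a: "a \<in> A" using assms(2) by (metis card.empty ex_in_conv not_one_le_zero)
  have "A \<noteq> {1..n}" using assms(3) by auto
  then obtain b where b: "b \<in> {1..n}" "b \<notin> A" using assms(1) by blast
  have t: "transpose a b \<in> carrier (sym_group n)" using a b assms(1)
    by (auto simp: sym_group_carrier intro!: permutes_swap_id)
  have "b \<in> transpose a b ` A" using a by (metis image_eqI transpose_apply_first)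
  then have "transpose a b \<notin> set_stab n A" using b unfolding set_stab_def by auto
  then show ?thesis using t by blast
qed

lemma aux_notin: "b \<in> T \<Longrightarrow> b \<notin> B \<Longrightarrow> c \<in> T \<Longrightarrow> c \<in> B \<Longrightarrow> T \<notin> {B, X - B}" by auto

lemma proper_part_stab:
  assumes "B \<subseteq> {1..n}" "card B = n div 2" "n \<ge> 6"
  shows "part_stab n B ({1..n} - B) \<noteq> carrier (sym_group n)"
proof -
  have fB: "finite B" using assms(1) finite_subset by blast
  have c2: "card B \<ge> 2" using assms(2,3) by presburger
  then have "B \<noteq> {}" by auto
  then obtain a where a: "a \<in> B" by blast
  have "card (B - {a}) \<ge> 1" using c2 a fB by simp
  then have "B - {a} \<noteq> {}" by (metis card.empty not_one_le_zero)
  then obtain c where c: "c \<in> B" "c \<noteq> a" by blast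
  have "card ({1..n} - B) = n - n div 2" using assms(1,2) fB by (simp add: card_Diff_subset)
  then have "card ({1..n} - B) > 0" using assms(3) by linarith
  then have "{1..n} - B \<noteq> {}" by (metis card.empty less_irrefl)
  then obtain b where b: "b \<in> {1..n}" "b \<notin> B" by (metis DiffE ex_in_conv)
  have aX: "a \<in> {1..n}" using assms(1) a by blast
  have t: "transpose a b \<in> carrier (sym_group n)"
    unfolding sym_group_carrier by (rule permutes_swap_id[OF aX b(1)])
  have bin: "b \<in> transpose a b ` B" using a by (metis image_eqI transpose_apply_first)
  have cb: "c \<noteq> b" using c(1) b(2) by blast
  have "transpose a b c = c" by (rule transpose_apply_other[OF c(2) cb])
  then have cin: "c \<in> transpose a b ` B" using c(1) by (metis image_eqI)
  have n1: "transpose a b ` B \<notin> {B, {1..n} - B}" by (rule aux_notin[OF bin b(2) cin c(1)])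
  have "transpose a b \<notin> part_stab n B ({1..n} - B)"
  proof
    assume "transpose a b \<in> part_stab n B ({1..n} - B)"
    then have e: "{transpose a b ` B, transpose a b ` ({1..n} - B)} = {B, {1..n} - B}"
      by (simp add: part_stab_def)
    have "transpose a b ` B \<in> {transpose a b ` B, transpose a b ` ({1..n} - B)}" by (rule insertI1)
    then have "transpose a b ` B \<in> {B, {1..n} - B}" unfolding e .
    then show False using n1 by contradiction
  qed
  then show ?thesis using t by blast
qed



lemma even_mod_even: "even (m::nat) \<Longrightarrow> even (k mod m) = even k"
  by (metis dvd_mod_iff)

lemma even_orbits_part:
  assumes g: "(g :: 'a::linorder \<Rightarrow> 'a) permutes X" and fX: "finite X" and ev: "\<forall>y\<in>X. even (card (orbit g y))"
  shows "\<exists>B \<subseteq> X. g ` B = X - B \<and> g ` (X - B) = B \<and> 2 * card B = card X"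
proof -
  have pg: "permutation g" using permutes_imp_permutation[OF fX g] .
  define r where "r y = Min (orbit g y)" for y
  define d where "d y = funpow_dist g (r y) y" for y
  define B where "B = {y \<in> X. even (d y)}"
  have key: "g y \<in> B \<longleftrightarrow> y \<notin> B" if y: "y \<in> X" for y
  proof -
    have fo: "finite (orbit g y)" by (simp add: pg finite_orbit permutation_self_in_orbit)
    have ry: "r y \<in> orbit g y" unfolding r_def by (rule Min_in[OF fo orbit_nonempty])
    have oe: "orbit g (r y) = orbit g y" using orb_eq[OF pg ry] .
    have yin: "y \<in> orbit g (r y)" unfolding oe by (rule permutation_self_in_orbit[OF pg])
    have rg: "r (g y) = r y" by (simp only: r_def permutation_orbit_step[OF pg])
    have "d (g y) = Suc (d y) mod card (orbit g (r y))"
      unfolding d_def rg by (rule orb_dist_step[OF pg yin])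
    then have dg: "d (g y) = Suc (d y) mod card (orbit g y)" unfolding oe .
    have ce: "even (card (orbit g y))" using ev y by blast
    have "even (d (g y)) \<longleftrightarrow> even (Suc (d y))" unfolding dg by (rule even_mod_even[OF ce])
    then have pe: "even (d (g y)) \<longleftrightarrow> \<not> even (d y)" by simp
    have gyX: "g y \<in> X" using permutes_in_image[OF g] y by simp
    show ?thesis unfolding B_def using y gyX pe by simp
  qed
  have gX: "g ` X = X" using g permutes_image by blast
  have inj: "inj g" using g permutes_inj by blast
  have preim: "\<exists>y\<in>X. g y = z" if "z \<in> X" for z using that gX by (metis image_iff)
  have e1: "g ` B = X - B"
  proof
    show "g ` B \<subseteq> X - B"
    proof
      fix z assume "z \<in> g ` B"
      then obtain y where y: "y \<in> B" "z = g y" by blast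
      then have yX: "y \<in> X" unfolding B_def by blast
      then have "g y \<notin> B" using key y(1) by blast
      moreover have "g y \<in> X" using permutes_in_image[OF g] yX by simp
      ultimately show "z \<in> X - B" using y(2) by blast
    qed
    show "X - B \<subseteq> g ` B"
    proof
      fix z assume z: "z \<in> X - B"
      then obtain y where "y \<in> X" "g y = z" using preim by blast
      then show "z \<in> g ` B" using key z by blast
    qed
  qed
  have e2: "g ` (X - B) = B"
  proof
    show "g ` (X - B) \<subseteq> B" using key by blast
    show "B \<subseteq> g ` (X - B)"
    proof
      fix z assume z: "z \<in> B"
      then have "z \<in> X" unfolding B_def by blast
      then obtain y where "y \<in> X" "g y = z" using preim by blast
      then show "z \<in> g ` (X - B)" using key z by blast
    qed
  qed
  have BX: "B \<subseteq> X" unfolding B_def by blast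
  have fB: "finite B" using finite_subset[OF BX fX] .
  have "card (g ` B) = card B" using card_image[OF inj_on_subset[OF inj subset_UNIV]] .
  then have c1: "card (X - B) = card B" unfolding e1 .
  have c2: "card (X - B) = card X - card B" by (rule card_Diff_subset[OF fB BX])
  have c3: "card B \<le> card X" by (rule card_mono[OF fX BX])
  have "2 * card B = card X" using c1 c2 c3 by linarith
  then show ?thesis using BX e1 e2 by blast
qed

lemma funpow_fix: "f y = y \<Longrightarrow> (f ^^ k) y = y"
  by (induct k) auto

lemma odd_orbits_even:
  assumes g: "g permutes X" and fX: "finite X" and od: "\<forall>y\<in>X. odd (card (orbit g y))"
  shows "evenperm g"
proof -
  have pg: "permutation g" using permutes_imp_permutation[OF fX g] .
  define N where "N = (\<Prod>y\<in>X. card (orbit g y))"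
  have oN: "odd N" unfolding N_def using od by (simp add: even_prod_iff[OF fX])
  have fixN: "(g ^^ N) y = y" for y
  proof (cases "y \<in> X")
    case True
    have "card (orbit g y) dvd N" unfolding N_def using fX True by (rule dvd_prodI)
    then have "N mod card (orbit g y) = 0" by simp
    moreover have "(g ^^ card (orbit g y)) y = y" using orb_card[OF pg] by blast
    ultimately show ?thesis using funpow_mod_eq by (metis funpow_0)
  next
    case False
    then show ?thesis using permutes_not_in[OF g] funpow_fix by metis
  qed
  define h where "h = g ^^ ((N + 1) div 2)"
  have kk: "(N + 1) div 2 + (N + 1) div 2 = Suc N" using oN by presburger
  have "g ^^ ((N + 1) div 2 + (N + 1) div 2) = h \<circ> h" unfolding h_def by (simp only: funpow_add)
  then have "h \<circ> h = g ^^ (Suc N)" using kk by simp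
  also have "\<dots> = g \<circ> (g ^^ N)" by (simp only: funpow.simps)
  also have "\<dots> = g" using fixN by (auto simp: fun_eq_iff)
  finally have "g = h \<circ> h" by simp
  moreover have "permutation h" unfolding h_def using pg permutation_funpow by blast
  ultimately show ?thesis using evenperm_comp by metis
qed





lemma orb_disj:
  assumes "permutation g" "y \<notin> orbit g x"
  shows "orbit g y \<inter> orbit g x = {}"
proof (rule ccontr)
  assume "orbit g y \<inter> orbit g x \<noteq> {}"
  then obtain z where "z \<in> orbit g y" "z \<in> orbit g x" by blast
  then have "orbit g y = orbit g x" using orb_eq[OF assms(1)] by metis
  then show False using assms permutation_self_in_orbit by metis
qed

lemma in_set_stab_cover:
  assumes "g permutes {1..n}" "A \<subseteq> {1..n}" "1 \<le> card A" "card A \<le> n div 3 - 1" "g ` A = A"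
  shows "g \<in> \<Union>(cover_H n)"
proof -
  have "set_stab n A \<in> cover_H n" unfolding cover_H_def using assms(2-4) by blast
  moreover have "g \<in> set_stab n A" unfolding set_stab_def using assms(1,5) by (simp add: sym_group_carrier)
  ultimately show ?thesis by blast
qed

lemma mixed_impossible:
  assumes g: "g permutes {1..n}" and nt: "n = 6 * t"
    and lb: "\<forall>y\<in>{1..n}. card (orbit g y) \<ge> 2 * t"
    and y1: "y1 \<in> {1..n}" "odd (card (orbit g y1))"
    and y2: "y2 \<in> {1..n}" "even (card (orbit g y2))"
  shows False
proof -
  let ?X = "{1..n}"
  have pg: "permutation g" using permutes_imp_permutation[OF _ g] by simp
  have ox: "orbit g y \<subseteq> ?X" if "y \<in> ?X" for y using orb_sub[OF g that] .
  have fo: "finite (orbit g y)" for y by (simp add: pg finite_orbit permutation_self_in_orbit)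
  have neq: "y1 \<notin> orbit g y2"
  proof
    assume "y1 \<in> orbit g y2"
    then have "orbit g y1 = orbit g y2" using orb_eq[OF pg] by blast
    then show False using y1 y2 by simp
  qed
  have dj12: "orbit g y1 \<inter> orbit g y2 = {}" using orb_disj[OF pg neq] .
  have c12: "card (orbit g y1 \<union> orbit g y2) = card (orbit g y1) + card (orbit g y2)"
    by (rule card_Un_disjoint[OF fo fo dj12])
  have s12: "orbit g y1 \<union> orbit g y2 \<subseteq> ?X" using ox y1 y2 by blast
  have le12: "card (orbit g y1 \<union> orbit g y2) \<le> card ?X" by (rule card_mono[OF _ s12]) simp
  show False
  proof (cases "card (orbit g y1) + card (orbit g y2) = n")
    case True
    then have "even (card (orbit g y1) + card (orbit g y2))" using nt by simp
    then show False using y1(2) y2(2) by simp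
  next
    case False
    then have "card (orbit g y1 \<union> orbit g y2) \<noteq> card ?X" using c12 by simp
    then have "orbit g y1 \<union> orbit g y2 \<noteq> ?X" by metis
    then obtain y3 where y3: "y3 \<in> ?X" "y3 \<notin> orbit g y1 \<union> orbit g y2" using s12 by blast
    have d3a: "orbit g y3 \<inter> orbit g y1 = {}" using orb_disj[OF pg] y3(2) by blast
    have d3b: "orbit g y3 \<inter> orbit g y2 = {}" using orb_disj[OF pg] y3(2) by blast
    have d3: "orbit g y3 \<inter> (orbit g y1 \<union> orbit g y2) = {}" using d3a d3b by blast
    have c123: "card (orbit g y3 \<union> (orbit g y1 \<union> orbit g y2)) = card (orbit g y3) + card (orbit g y1 \<union> orbit g y2)"
      by (rule card_Un_disjoint[OF fo _ d3]) (simp add: fo)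
    have s3: "orbit g y3 \<union> (orbit g y1 \<union> orbit g y2) \<subseteq> ?X" using ox[OF y3(1)] s12 by blast
    have "card (orbit g y3 \<union> (orbit g y1 \<union> orbit g y2)) \<le> card ?X" by (rule card_mono[OF _ s3]) simp
    then have sum: "card (orbit g y3) + card (orbit g y1) + card (orbit g y2) \<le> n"
      using c123 c12 by simp
    have "card (orbit g y1) \<ge> 2 * t" "card (orbit g y2) \<ge> 2 * t" "card (orbit g y3) \<ge> 2 * t"
      using lb y1(1) y2(1) y3(1) by blast+
    then have "card (orbit g y1) = 2 * t" "card (orbit g y2) = 2 * t" using sum nt by linarith+
    then show False using y1(2) y2(2) by simp
  qed
qed

lemma cover_main:
  assumes g: "g permutes {1..n}" and n: "n > 0" "n mod 6 = 0"
  shows "g \<in> \<Union>(cover_H n)"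
proof -
  let ?X = "{1..n}"
  have pg: "permutation g" using permutes_imp_permutation[OF _ g] by simp
  obtain t where nt: "n = 6 * t" using n(2) by (metis dvd_def mod_0_imp_dvd)
  have tpos: "t > 0" using nt n(1) by simp
  have d3: "n div 3 = 2 * t" using nt by simp
  have ox: "orbit g y \<subseteq> ?X" if "y \<in> ?X" for y using orb_sub[OF g that] .
  have fo: "finite (orbit g y)" for y by (simp add: pg finite_orbit permutation_self_in_orbit)
  have cpos: "card (orbit g y) \<ge> 1" for y using fo orbit_nonempty
    by (metis One_nat_def Suc_leI card_gt_0_iff)
  have img: "g ` orbit g y = orbit g y" for y using orb_image[OF pg] .
  show ?thesis
  proof (cases "\<exists>y\<in>?X. card (orbit g y) \<le> 2 * t - 1")
    case True
    then obtain y where y: "y \<in> ?X" "card (orbit g y) \<le> 2 * t - 1" by blast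
    have "card (orbit g y) \<le> n div 3 - 1" using y(2) d3 by simp
    then show ?thesis by (rule in_set_stab_cover[OF g ox[OF y(1)] cpos _ img])
  next
    case nA: False
    have lb: "\<forall>y\<in>?X. card (orbit g y) \<ge> 2 * t"
    proof
      fix y assume "y \<in> ?X"
      then have "\<not> card (orbit g y) \<le> 2 * t - 1" using nA by blast
      then show "card (orbit g y) \<ge> 2 * t" using tpos by linarith
    qed
    show ?thesis
    proof (cases "\<exists>y\<in>?X. card (orbit g y) \<ge> 4 * t + 1 \<and> orbit g y \<noteq> ?X")
      case True
      then obtain y where y: "y \<in> ?X" "card (orbit g y) \<ge> 4 * t + 1" "orbit g y \<noteq> ?X" by blast
      have ps: "orbit g y \<subset> ?X" using y(3) ox[OF y(1)] by blast
      have "card (orbit g y) < card ?X" by (rule psubset_card_mono[OF _ ps]) simp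
      then have lt: "card (orbit g y) < n" by simp
      have cA: "card (?X - orbit g y) = n - card (orbit g y)"
        using card_Diff_subset[OF fo ox[OF y(1)]] by simp
      have "g ` (?X - orbit g y) = g ` ?X - g ` orbit g y"
        using image_set_diff[OF permutes_inj[OF g]] .
      then have gi: "g ` (?X - orbit g y) = ?X - orbit g y" using img permutes_image[OF g] by simp
      have c1: "1 \<le> card (?X - orbit g y)" using cA lt by linarith
      have c2: "card (?X - orbit g y) \<le> n div 3 - 1" using cA y(2) d3 nt by linarith
      show ?thesis by (rule in_set_stab_cover[OF g _ c1 c2 gi]) blast
    next
      case nB: False
      show ?thesis
      proof (cases "\<forall>y\<in>?X. even (card (orbit g y))")
        case True
        then obtain B where B: "B \<subseteq> ?X" "g ` B = ?X - B" "g ` (?X - B) = B" "2 * card B = card ?X"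
          using even_orbits_part[OF g] by blast
        have "card B = n div 2" using B(4) by simp
        then have "part_stab n B (?X - B) \<in> cover_H n" unfolding cover_H_def using B(1) by blast
        moreover have "{g ` B, g ` (?X - B)} = {B, ?X - B}" unfolding B(2,3) by (rule insert_commute)
        then have "g \<in> part_stab n B (?X - B)" unfolding part_stab_def
          using g by (simp add: sym_group_carrier)
        ultimately show ?thesis by blast
      next
        case nC: False
        then obtain y1 where y1: "y1 \<in> ?X" "odd (card (orbit g y1))" by blast
        show ?thesis
        proof (cases "\<forall>y\<in>?X. odd (card (orbit g y))")
          case True
          then have "evenperm g" using odd_orbits_even[OF g] by blast
          then have "g \<in> carrier (alt_group n)" using g by (simp add: alt_group_carrier)
          then show ?thesis unfolding cover_H_def by blast
        next
          case False
          then obtain y2 where y2: "y2 \<in> ?X" "even (card (orbit g y2))" by blast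
          show ?thesis using mixed_impossible[OF g nt lb y1 y2] by blast
        qed
      qed
    qed
  qed
qed


theorem lemma3p3:
  fixes n :: nat
  assumes "n > 0" and "n mod 6 = 0"
  shows "\<Union>(cover_H n) = carrier (sym_group n) \<and> is_cover (sym_group n) (cover_H n)"
proof -
  have n6: "n \<ge> 6" using assms by presburger
  have cov: "\<Union>(cover_H n) = carrier (sym_group n)"
  proof
    show "\<Union>(cover_H n) \<subseteq> carrier (sym_group n)"
      unfolding cover_H_def set_stab_def part_stab_def
      using alt_group_carrier sym_group_carrier by auto
    show "carrier (sym_group n) \<subseteq> \<Union>(cover_H n)"
      using cover_main[OF _ assms] sym_group_carrier by blast
  qed
  have sub: "subgroup K (sym_group n) \<and> K \<noteq> carrier (sym_group n)" if K: "K \<in> cover_H n" for K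
  proof -
    consider (P) B where "K = part_stab n B ({1..n} - B)" "B \<subseteq> {1..n}" "card B = n div 2"
      | (Alt) "K = carrier (alt_group n)"
      | (S) A where "K = set_stab n A" "A \<subseteq> {1..n}" "1 \<le> card A" "card A \<le> n div 3 - 1"
      using K unfolding cover_H_def by blast
    then show ?thesis
    proof cases
      case P then show ?thesis using subgroup_part_stab proper_part_stab[OF _ _ n6] by blast
    next
      case Alt then show ?thesis using alt_group_is_subgroup proper_alt n6 by simp
    next
      case S
      have "card A < n" using S(4) n6 by linarith
      then show ?thesis using S subgroup_set_stab proper_set_stab by blast
    qed
  qed
  show ?thesis using cov sub unfolding is_cover_def by blast
qed

end
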